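(* Let $\rho$ be a full-rank density operator on a finite-dimensional Hilbert space, let $H$ be a Hermitian operator, and set $\rho_\theta = e^{-i\theta H}\rho\, e^{i\theta H}$. Define $\Lambda_\theta=(\partial_\theta\rho_\theta)\rho_\theta^{-1}$, so that $\Lambda_\theta^\dagger=\rho_\theta^{-1}\partial_\theta\rho_\theta$. Then the sub-QFI satisfies $$\mathcal{I}(\rho_\theta)=2\,\mathrm{Tr}\big[\Lambda_\theta^\dagger\Lambda_\theta\rho_\theta^2\big].$$
   Context: The sub-QFI is $\mathcal{I}(\rho_\theta)=8\lim_{\delta\to 0}\frac{1-\sqrt{G(\rho_\theta,\rho_{\theta+\delta})}}{\delta^2}$, where for density operators $\rho,\sigma$ the super-fidelity is $G(\rho,\sigma)=\mathrm{Tr}[\rho\sigma]+\sqrt{(1-\mathrm{Tr}[\rho^2])(1-\mathrm{Tr}[\sigma^2])}$. *)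

theory Defs
  imports "HOL-Analysis.Analysis"
begin

definition cadj :: "complex^'n^'n \<Rightarrow> complex^'n^'n" where
  "cadj A = (\<chi> i j. cnj (A $ j $ i))"

definition csmat :: "complex \<Rightarrow> complex^'n^'n \<Rightarrow> complex^'n^'n" where
  "csmat c A = (\<chi> i j. c * A $ i $ j)"

fun mpow :: "complex^'n^'n \<Rightarrow> nat \<Rightarrow> complex^'n^'n" where
  "mpow A 0 = mat 1"
| "mpow A (Suc k) = A ** mpow A k"

definition mexp :: "complex^'n^'n \<Rightarrow> complex^'n^'n" where
  "mexp A = (\<Sum>k. scaleR (inverse (fact k)) (mpow A k))"

definition hermitian :: "complex^'n^'n \<Rightarrow> bool" where
  "hermitian A \<longleftrightarrow> cadj A = A"

definition qform :: "complex^'n^'n \<Rightarrow> complex^'n \<Rightarrow> complex" where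
  "qform A x = (\<Sum>i\<in>UNIV. \<Sum>j\<in>UNIV. cnj (x $ i) * A $ i $ j * x $ j)"

definition density_op :: "complex^'n^'n \<Rightarrow> bool" where
  "density_op \<rho> \<longleftrightarrow> hermitian \<rho> \<and>
     (\<forall>x. Im (qform \<rho> x) = 0 \<and> 0 \<le> Re (qform \<rho> x)) \<and> trace \<rho> = 1"

text \<open>Super-fidelity G(rho,sigma) = Tr[rho sigma] + sqrt((1-Tr[rho^2])(1-Tr[sigma^2])).
  For density operators all traces involved are real; we take real parts.\<close>
definition super_fidelity :: "complex^'n^'n \<Rightarrow> complex^'n^'n \<Rightarrow> real" where
  "super_fidelity \<rho> \<sigma> = Re (trace (\<rho> ** \<sigma>)) +
      sqrt ((1 - Re (trace (\<rho> ** \<rho>))) * (1 - Re (trace (\<sigma> ** \<sigma>))))"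

end

theory Submission
  imports Defs
begin

lemma bl_mv: "bounded_linear (\<lambda>x. (A::complex^'n^'n) *v x)"
  using linear_conv_bounded_linear matrix_vector_mul_linear by blast
lemma mv_add: "((A::complex^'n^'n) + B) *v x = A *v x + B *v x"
  by (simp add: vec_eq_iff matrix_vector_mult_def sum.distrib algebra_simps)
lemma mv_scaleR: "((r::real) *\<^sub>R (A::complex^'n^'n)) *v x = r *\<^sub>R (A *v x)"
  by (simp add: vec_eq_iff matrix_vector_mult_def scaleR_sum_right)
lemma e1: "(\<lambda>x. ((A::complex^'n^'n) + B) *v x) = (\<lambda>x. A *v x + B *v x)" by (simp add: mv_add)
lemma e2: "(\<lambda>x. (r *\<^sub>R (A::complex^'n^'n)) *v x) = (\<lambda>x. r *\<^sub>R (A *v x))" by (simp add: mv_scaleR)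
lemma e3: "onorm (\<lambda>x. ((A::complex^'n^'n) + B) *v x) \<le> onorm (\<lambda>x. A *v x) + onorm (\<lambda>x. B *v x)"
    unfolding e1 by (rule onorm_triangle[OF bl_mv bl_mv])
lemma e4: "onorm (\<lambda>x. (r *\<^sub>R (A::complex^'n^'n)) *v x) = \<bar>r\<bar> * onorm (\<lambda>x. A *v x)"
    unfolding e2 by (rule onorm_scaleR[OF bl_mv])
lemma mv_zero_iff: "(\<forall>x. (A::complex^'n^'n) *v x = 0) \<longleftrightarrow> A = 0"
proof
  assume h: "\<forall>x. A *v x = 0"
  have "(\<lambda>x. A *v x) = (\<lambda>x. 0)" using h by auto
  then have "A = matrix (\<lambda>x. 0)" using matrix_of_matrix_vector_mul[of A] by simp
  then show "A = 0" by (simp add: matrix_def vec_eq_iff)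
qed simp
lemma e5: "onorm (\<lambda>x. (A::complex^'n^'n) *v x) = 0 \<longleftrightarrow> A = 0"
  by (simp add: onorm_eq_0[OF bl_mv] mv_zero_iff)

typedef (overloaded) 'n cm = "UNIV :: (complex^'n::finite^'n) set" morphisms cm_rep cm_abs by auto
setup_lifting type_definition_cm

instantiation cm :: (finite) real_normed_vector
begin
lift_definition zero_cm :: "'a cm" is "0" .
lift_definition plus_cm :: "'a cm \<Rightarrow> 'a cm \<Rightarrow> 'a cm" is "(+)" .
lift_definition minus_cm :: "'a cm \<Rightarrow> 'a cm \<Rightarrow> 'a cm" is "(-)" .
lift_definition uminus_cm :: "'a cm \<Rightarrow> 'a cm" is "uminus" .
lift_definition scaleR_cm :: "real \<Rightarrow> 'a cm \<Rightarrow> 'a cm" is "scaleR" .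
lift_definition norm_cm :: "'a cm \<Rightarrow> real" is "\<lambda>A. onorm (\<lambda>x. A *v x)" .
definition dist_cm :: "'a cm \<Rightarrow> 'a cm \<Rightarrow> real" where "dist_cm a b = norm (a - b)"
definition sgn_cm :: "'a cm \<Rightarrow> 'a cm" where "sgn_cm x = scaleR (inverse (norm x)) x"
definition uniformity_cm :: "('a cm \<times> 'a cm) filter" where
  "uniformity_cm = (INF e\<in>{0 <..}. principal {(x, y). dist x y < e})"
definition open_cm :: "'a cm set \<Rightarrow> bool" where
  "open_cm S = (\<forall>x\<in>S. \<forall>\<^sub>F (x', y) in uniformity. x' = x \<longrightarrow> y \<in> S)"
lemma cm_tri: "norm (a + b) \<le> norm a + norm (b::'a cm)"
  by transfer (rule e3)
lemma cm_scale: "norm (r *\<^sub>R a) = \<bar>r\<bar> * norm (a::'a cm)"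
  by transfer (rule e4)
lemma cm_n0: "(norm a = 0) = (a = (0::'a cm))"
  by transfer (rule e5)
lemma cm_rv:
  fixes a b c :: "'a cm" and r s :: real
  shows "a + b + c = a + (b + c)" "a + b = b + a" "0 + a = a" "- a + a = 0" "a - b = a + - b"
   "r *\<^sub>R (a + b) = r *\<^sub>R a + r *\<^sub>R b" "(r + s) *\<^sub>R a = r *\<^sub>R a + s *\<^sub>R a"
   "r *\<^sub>R s *\<^sub>R a = (r * s) *\<^sub>R a" "1 *\<^sub>R a = a"
  by (transfer, simp add: scaleR_right_distrib scaleR_left_distrib)+
instance
proof
  fix a b c x y :: "'a cm" and r s :: real and U :: "'a cm set"
  show "a + b + c = a + (b + c)" "a + b = b + a" "0 + a = a" "- a + a = 0" "a - b = a + - b"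
   "r *\<^sub>R (a + b) = r *\<^sub>R a + r *\<^sub>R b" "(r + s) *\<^sub>R a = r *\<^sub>R a + s *\<^sub>R a"
   "r *\<^sub>R s *\<^sub>R a = (r * s) *\<^sub>R a" "1 *\<^sub>R a = a" by (rule cm_rv)+
  show "dist x y = norm (x - y)" by (rule dist_cm_def)
  show "sgn x = inverse (norm x) *\<^sub>R x" by (rule sgn_cm_def)
  show "(uniformity :: ('a cm \<times> 'a cm) filter) = (INF e\<in>{0 <..}. principal {(x, y). dist x y < e})"
    by (rule uniformity_cm_def)
  show "open U = (\<forall>x\<in>U. \<forall>\<^sub>F (x', y) in uniformity. x' = x \<longrightarrow> y \<in> U)"
    by (rule open_cm_def)
  show "norm x = 0 \<longleftrightarrow> x = 0" by (rule cm_n0)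
  show "norm (x + y) \<le> norm x + norm y" by (rule cm_tri)
  show "norm (r *\<^sub>R x) = \<bar>r\<bar> * norm x" by (rule cm_scale)
qed
end

lemma mm_scaleR_left: "((r::real) *\<^sub>R (A::complex^'n^'n)) ** B = r *\<^sub>R (A ** B)"
  by (simp add: vec_eq_iff matrix_matrix_mult_def scaleR_sum_right)
lemma mm_scaleR_right: "(A::complex^'n^'n) ** ((r::real) *\<^sub>R B) = r *\<^sub>R (A ** B)"
  by (simp add: vec_eq_iff matrix_matrix_mult_def scaleR_sum_right)
lemma mm_rdistrib: "((A::complex^'n^'n) + B) ** C = A ** C + B ** C"
  by (simp add: vec_eq_iff matrix_matrix_mult_def sum.distrib distrib_right)
lemma e6: "onorm (\<lambda>x. ((A::complex^'n^'n) ** (B::complex^'n^'n)) *v x) \<le> onorm (\<lambda>x. A *v x) * onorm (\<lambda>x. B *v x)"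
proof -
  have "onorm ((\<lambda>x. A *v x) o (\<lambda>x. B *v x)) \<le> onorm (\<lambda>x. A *v x) * onorm (\<lambda>x. B *v x)"
    by (intro onorm_compose bl_mv)
  moreover have "((\<lambda>x. A *v x) o (\<lambda>x. B *v x)) = (\<lambda>x. (A ** B) *v x)"
    by (simp add: o_def matrix_vector_mul_assoc)
  ultimately show ?thesis by simp
qed
lemma e7: "onorm (\<lambda>x. (mat 1 :: complex^'n^'n) *v x) = 1"
proof -
  have "(\<lambda>x. (mat 1 :: complex^'n^'n) *v x) = (\<lambda>x. x)" by simp
  then show ?thesis using onorm_id by simp
qed

instantiation cm :: (finite) ring_1
begin
lift_definition one_cm :: "'a cm" is "mat 1" .
lift_definition times_cm :: "'a cm \<Rightarrow> 'a cm \<Rightarrow> 'a cm" is "(**)" .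
lemma r1: "a * b * c = a * (b * (c::'a cm))" by transfer (simp add: matrix_mul_assoc)
lemma r2: "1 * a = (a::'a cm)" by transfer simp
lemma r3: "a * 1 = (a::'a cm)" by transfer simp
lemma r4: "(a + b) * c = a * c + b * (c::'a cm)" by transfer (simp add: mm_rdistrib)
lemma r5: "a * (b + c) = a * b + a * (c::'a cm)" by transfer (simp add: matrix_add_ldistrib)
lemma r6: "(0::'a cm) \<noteq> 1" by transfer (simp add: vec_eq_iff mat_def)
lemmas cm_ring = r1 r2 r3 r4 r5 r6
instance
proof
  fix a b c :: "'a cm"
  show "a * b * c = a * (b * c)" "1 * a = a" "a * 1 = a" "(a + b) * c = a * c + b * c"
    "a * (b + c) = a * b + a * c" "(0::'a cm) \<noteq> 1" by (rule cm_ring)+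
qed
end

lemma a1: "r *\<^sub>R a * b = r *\<^sub>R (a * (b::'a::finite cm))" by transfer (simp add: mm_scaleR_left)
lemma a2: "a * r *\<^sub>R b = r *\<^sub>R (a * (b::'a::finite cm))" by transfer (simp add: mm_scaleR_right)
lemmas cm_alg = a1 a2

instance cm :: (finite) real_normed_algebra_1
proof
  fix a b :: "'a cm" and r :: real
  show "r *\<^sub>R a * b = r *\<^sub>R (a * b)" "a * r *\<^sub>R b = r *\<^sub>R (a * b)" by (rule cm_alg)+
  show "norm (a * b) \<le> norm a * norm b" by transfer (rule e6)
  show "norm (1::'a cm) = 1" by transfer (rule e7)
qed


lemma nl1: "norm (v::'a::real_normed_vector^'n) \<le> (\<Sum>i\<in>UNIV. norm (v$i))"
  by (simp add: norm_vec_def L2_set_le_sum)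
lemma nl1m: "norm (A::complex^'n^'n) \<le> (\<Sum>i\<in>UNIV. \<Sum>j\<in>UNIV. norm (A$i$j))"
proof -
  have "norm A \<le> (\<Sum>i\<in>UNIV. norm (A$i))" by (rule nl1)
  also have "\<dots> \<le> (\<Sum>i\<in>UNIV. \<Sum>j\<in>UNIV. norm (A$i$j))" by (intro sum_mono nl1)
  finally show ?thesis .
qed
lemma axis_norm_le: "norm (axis j (1::complex) :: complex^'n) \<le> 1"
proof -
  have "(\<Sum>i\<in>UNIV. norm ((axis j (1::complex) :: complex^'n) $ i)) = 1"
    by (simp add: axis_def if_distrib sum.delta cong: if_cong)
  then show ?thesis using nl1[of "axis j (1::complex) :: complex^'n"] by simp
qed
lemma entry_le: "norm (A $ i $ j) \<le> onorm (\<lambda>x. (A::complex^'n^'n) *v x)"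
proof -
  have "A $ i $ j = (A *v axis j 1) $ i"
    by (simp add: matrix_vector_mult_def axis_def if_distrib sum.delta cong: if_cong)
  also have "norm \<dots> \<le> norm (A *v axis j 1)" by (rule Finite_Cartesian_Product.norm_nth_le)
  also have "\<dots> \<le> onorm (\<lambda>x. A *v x) * norm (axis j (1::complex) :: complex^'n)"
    by (rule onorm[OF bl_mv])
  also have "\<dots> \<le> onorm (\<lambda>x. A *v x) * 1"
    by (rule mult_left_mono[OF axis_norm_le onorm_pos_le[OF bl_mv]])
  finally show ?thesis by simp
qed
lemma rep_bound: "norm (A::complex^'n^'n) \<le> real (CARD('n))^2 * onorm (\<lambda>x. A *v x)"
proof -
  have "norm A \<le> (\<Sum>i\<in>UNIV. \<Sum>j\<in>UNIV. norm (A$i$j))" by (rule nl1m)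
  also have "\<dots> \<le> (\<Sum>i\<in>(UNIV::'n set). \<Sum>j\<in>(UNIV::'n set). onorm (\<lambda>x. A *v x))"
    by (intro sum_mono entry_le)
  also have "\<dots> = real (CARD('n))^2 * onorm (\<lambda>x. A *v x)" by (simp add: power2_eq_square)
  finally show ?thesis .
qed
lemma abs_bound: "onorm (\<lambda>x. (A::complex^'n^'n) *v x) \<le> real (CARD('n))^2 * norm A"
proof (rule onorm_bound)
  show "0 \<le> real (CARD('n))^2 * norm A" by simp
  fix x :: "complex^'n"
  have "norm (A *v x) \<le> (\<Sum>i\<in>UNIV. norm ((A *v x)$i))" by (rule nl1)
  also have "\<dots> \<le> (\<Sum>i\<in>(UNIV::'n set). \<Sum>j\<in>(UNIV::'n set). norm A * norm x)"
  proof (intro sum_mono)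
    fix i
    have "norm ((A *v x)$i) = norm (\<Sum>j\<in>UNIV. A$i$j * x$j)" by (simp add: matrix_vector_mult_def)
    also have "\<dots> \<le> (\<Sum>j\<in>UNIV. norm (A$i$j * x$j))" by (rule norm_sum)
    also have "\<dots> \<le> (\<Sum>j\<in>(UNIV::'n set). norm A * norm x)"
    proof (intro sum_mono)
      fix j
      have "norm (A$i$j) \<le> norm A" using Finite_Cartesian_Product.norm_nth_le[of "A$i" j] Finite_Cartesian_Product.norm_nth_le[of A i] by linarith
      moreover have "norm (x$j) \<le> norm x" by (rule Finite_Cartesian_Product.norm_nth_le)
      ultimately show "norm (A$i$j * x$j) \<le> norm A * norm x"
        by (simp add: norm_mult mult_mono)
    qed
    finally show "norm ((A *v x)$i) \<le> (\<Sum>j\<in>(UNIV::'n set). norm A * norm x)" .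
  qed
  also have "\<dots> = real (CARD('n))^2 * norm A * norm x" by (simp add: power2_eq_square)
  finally show "norm (A *v x) \<le> real (CARD('n))^2 * norm A * norm x" .
qed

lemma bl_rep: "bounded_linear (cm_rep :: 'n::finite cm \<Rightarrow> _)"
proof (rule bounded_linear_intro)
  fix x y :: "'n cm" and r :: real
  show "cm_rep (x + y) = cm_rep x + cm_rep y" by transfer simp
  show "cm_rep (r *\<^sub>R x) = r *\<^sub>R cm_rep x" by transfer simp
  show "norm (cm_rep x) \<le> norm x * real (CARD('n))^2"
    using rep_bound[of "cm_rep x"] by (simp add: norm_cm.rep_eq mult.commute)
qed
lemma bl_abs: "bounded_linear (cm_abs :: _ \<Rightarrow> 'n::finite cm)"
proof (rule bounded_linear_intro)
  fix x y :: "complex^'n^'n" and r :: real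
  show "cm_abs (x + y) = cm_abs x + cm_abs y" by (simp add: plus_cm.abs_eq)
  show "cm_abs (r *\<^sub>R x) = r *\<^sub>R cm_abs x" by (simp add: scaleR_cm.abs_eq)
  show "norm (cm_abs x :: 'n cm) \<le> norm x * real (CARD('n))^2"
    using abs_bound[of x] by (simp add: norm_cm.abs_eq mult.commute)
qed

instance cm :: (finite) banach
proof
  fix X :: "nat \<Rightarrow> 'a cm" assume "Cauchy X"
  then have "Cauchy (\<lambda>n. cm_rep (X n))" by (rule bounded_linear.Cauchy[OF bl_rep])
  then obtain L where "(\<lambda>n. cm_rep (X n)) \<longlonglongrightarrow> L" using Cauchy_convergent_iff convergent_def by blast
  then have "(\<lambda>n. cm_abs (cm_rep (X n))) \<longlonglongrightarrow> cm_abs L" by (rule bounded_linear.tendsto[OF bl_abs])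
  then show "convergent X" by (auto simp: cm_rep_inverse convergent_def)
qed

lemma rep_mult: "cm_rep (a * b) = cm_rep a ** cm_rep b" by transfer simp
lemma rep_one: "cm_rep 1 = mat 1" by transfer simp
lemma rep_pow: "cm_rep (a ^ k) = mpow (cm_rep a) k"
  by (induction k) (simp_all add: rep_one rep_mult)
lemma mexp_rep: "mexp A = cm_rep (exp (cm_abs A :: 'n::finite cm))"
proof -
  have "cm_rep (exp (cm_abs A :: 'n cm)) = (\<Sum>n. cm_rep ((cm_abs A :: 'n cm) ^ n /\<^sub>R fact n))"
    unfolding exp_def by (rule bounded_linear.suminf[OF bl_rep summable_exp_generic])
  also have "\<dots> = (\<Sum>n. scaleR (inverse (fact n)) (mpow A n))"
    by (simp add: scaleR_cm.rep_eq rep_pow cm_abs_inverse)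
  finally show ?thesis by (simp add: mexp_def)
qed


section \<open>Matrix algebra\<close>


lemma minv: "invertible (A::complex^'n^'n) \<Longrightarrow> A ** matrix_inv A = mat 1 \<and> matrix_inv A ** A = mat 1"
  unfolding invertible_def matrix_inv_def by (rule someI_ex)

lemma cadj_nth: "cadj A $ i $ j = cnj (A $ j $ i)" by (simp add: cadj_def)
lemma cadj_mult: "cadj ((A::complex^'n^'n) ** B) = cadj B ** cadj A"
  by (simp add: vec_eq_iff cadj_def matrix_matrix_mult_def mult.commute)
lemma cadj_cadj: "cadj (cadj A) = A" by (simp add: vec_eq_iff cadj_def)
lemma cadj_add: "cadj ((A::complex^'n^'n) + B) = cadj A + cadj B" by (simp add: vec_eq_iff cadj_def)
lemma cadj_diff: "cadj ((A::complex^'n^'n) - B) = cadj A - cadj B" by (simp add: vec_eq_iff cadj_def)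
lemma cadj_minus: "cadj (- (A::complex^'n^'n)) = - cadj A" by (simp add: vec_eq_iff cadj_def)
lemma cadj_scaleR: "cadj ((r::real) *\<^sub>R (A::complex^'n^'n)) = r *\<^sub>R cadj A"
  by (simp add: vec_eq_iff cadj_def complex_cnj_scaleR)
lemma cadj_mat1: "cadj (mat 1 :: complex^'n^'n) = mat 1" by (simp add: vec_eq_iff cadj_def mat_def)
lemma cadj_csmat: "cadj (csmat c A) = csmat (cnj c) (cadj (A::complex^'n^'n))"
  by (simp add: vec_eq_iff cadj_def csmat_def)
lemma trace_cadj: "trace (cadj (A::complex^'n^'n)) = cnj (trace A)"
  by (simp add: trace_def cadj_def)
lemma trace_scaleR: "trace ((r::real) *\<^sub>R (A::complex^'n^'n)) = r *\<^sub>R trace A"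
  by (simp add: trace_def scaleR_sum_right)
lemma mm_minus_left: "(- (A::complex^'n^'n)) ** B = - (A ** B)"
  by (simp add: vec_eq_iff matrix_matrix_mult_def sum_negf)
lemma mm_minus_right: "(A::complex^'n^'n) ** (- B) = - (A ** B)"
  by (simp add: vec_eq_iff matrix_matrix_mult_def sum_negf)
lemma mm_diff_left: "((A::complex^'n^'n) - B) ** C = A ** C - B ** C"
  by (simp add: vec_eq_iff matrix_matrix_mult_def sum_subtractf left_diff_distrib)
lemma mm_diff_right: "(A::complex^'n^'n) ** (B - C) = A ** B - A ** C"
  by (simp add: vec_eq_iff matrix_matrix_mult_def sum_subtractf right_diff_distrib)

lemma linear_cadj: "linear (cadj :: complex^'n^'n \<Rightarrow> complex^'n^'n)"
  by (rule linearI) (simp_all add: cadj_add cadj_scaleR)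
lemma bl_cadj: "bounded_linear (cadj :: complex^'n^'n \<Rightarrow> complex^'n^'n)"
  using linear_cadj linear_conv_bounded_linear by blast

lemma bilinear_mm: "bilinear ((**) :: complex^'n^'n \<Rightarrow> complex^'n^'n \<Rightarrow> complex^'n^'n)"
  unfolding bilinear_def
  by (auto intro!: linearI simp: matrix_add_ldistrib mm_rdistrib mm_scaleR_left mm_scaleR_right)
lemma bb_mm: "bounded_bilinear ((**) :: complex^'n^'n \<Rightarrow> complex^'n^'n \<Rightarrow> complex^'n^'n)"
  using bilinear_mm bilinear_conv_bounded_bilinear by blast

lemma mpow_commute: "(A::complex^'n^'n) ** mpow A k = mpow A k ** A"
  by (induction k) (simp_all add: matrix_mul_assoc)
lemma cadj_mpow: "cadj (mpow (A::complex^'n^'n) k) = mpow (cadj A) k"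
proof (induction k)
  case 0 then show ?case by (simp add: cadj_mat1)
next
  case (Suc k)
  have "cadj (mpow A (Suc k)) = mpow (cadj A) k ** cadj A" by (simp add: cadj_mult Suc)
  also have "\<dots> = mpow (cadj A) (Suc k)" by (simp add: mpow_commute)
  finally show ?case .
qed

section \<open>Matrix exponential\<close>

lemma mexp_summable: "summable (\<lambda>k. scaleR (inverse (fact k)) (mpow (A::complex^'n^'n) k))"
proof -
  have "summable (\<lambda>k. cm_rep ((cm_abs A :: 'n cm) ^ k /\<^sub>R fact k))"
    by (rule bounded_linear.summable[OF bl_rep summable_exp_generic])
  then show ?thesis by (simp add: scaleR_cm.rep_eq rep_pow cm_abs_inverse)
qed

lemma cadj_mexp: "cadj (mexp (A::complex^'n^'n)) = mexp (cadj A)"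
  unfolding mexp_def
  by (simp add: bounded_linear.suminf[OF bl_cadj mexp_summable] cadj_scaleR cadj_mpow)

lemma abs_scaleR: "cm_abs (r *\<^sub>R A) = r *\<^sub>R (cm_abs A :: 'n::finite cm)"
  by (simp add: scaleR_cm.abs_eq)
lemma abs_minus: "cm_abs (- A) = - (cm_abs A :: 'n::finite cm)"
  by (simp add: uminus_cm.abs_eq)

lemma mexp_scale_rep: "mexp (t *\<^sub>R A) = cm_rep (exp (t *\<^sub>R (cm_abs A :: 'n::finite cm)))"
  by (simp add: mexp_rep abs_scaleR)

lemma mexp_deriv_left:
  "((\<lambda>t. mexp (t *\<^sub>R (A::complex^'n^'n))) has_vector_derivative A ** mexp (t *\<^sub>R A)) (at t)"
proof -
  have "((\<lambda>t. cm_rep (exp (t *\<^sub>R (cm_abs A :: 'n cm)))) has_vector_derivative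
      cm_rep (cm_abs A * exp (t *\<^sub>R (cm_abs A :: 'n cm)))) (at t)"
    by (rule bounded_linear.has_vector_derivative[OF bl_rep exp_scaleR_has_vector_derivative_left])
  then show ?thesis by (simp add: mexp_scale_rep rep_mult cm_abs_inverse)
qed
lemma mexp_deriv_right:
  "((\<lambda>t. mexp (t *\<^sub>R (A::complex^'n^'n))) has_vector_derivative mexp (t *\<^sub>R A) ** A) (at t)"
proof -
  have "((\<lambda>t. cm_rep (exp (t *\<^sub>R (cm_abs A :: 'n cm)))) has_vector_derivative
      cm_rep (exp (t *\<^sub>R (cm_abs A :: 'n cm)) * cm_abs A)) (at t)"
    by (rule bounded_linear.has_vector_derivative[OF bl_rep exp_scaleR_has_vector_derivative_right])
  then show ?thesis by (simp add: mexp_scale_rep rep_mult cm_abs_inverse)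
qed
lemma mexp_inv:
  "mexp (t *\<^sub>R (A::complex^'n^'n)) ** mexp (t *\<^sub>R (- A)) = mat 1"
  "mexp (t *\<^sub>R (- A)) ** mexp (t *\<^sub>R (A::complex^'n^'n)) = mat 1"
proof -
  let ?x = "t *\<^sub>R (cm_abs A :: 'n cm)"
  have a: "cm_abs (t *\<^sub>R (- A)) = - ?x" "cm_abs (- (t *\<^sub>R A)) = - ?x" by (simp_all add: abs_scaleR abs_minus)
  have "exp ?x * exp (- ?x) = 1" by (rule exp_minus_inverse)
  then have "cm_rep (exp ?x * exp (- ?x)) = mat 1" by (simp add: rep_one)
  then show "mexp (t *\<^sub>R A) ** mexp (t *\<^sub>R (- A)) = mat 1"
    by (simp add: mexp_rep abs_scaleR a rep_mult)
  have "exp (- ?x) * exp (- (- ?x)) = 1" by (rule exp_minus_inverse)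
  then have "cm_rep (exp (- ?x) * exp ?x) = mat 1" by (simp add: rep_one)
  then show "mexp (t *\<^sub>R (- A)) ** mexp (t *\<^sub>R A) = mat 1"
    by (simp add: mexp_rep abs_scaleR a rep_mult)
qed


lemma quad_disc:
  fixes A B C :: real
  assumes h: "\<And>t. 0 \<le> A*t^2 - 2*B*t + C" and A: "0 \<le> A"
  shows "B^2 \<le> A*C"
proof (cases "A = 0")
  case True
  show ?thesis
  proof (cases "B = 0")
    case False
    have "0 \<le> A*((C+1)/(2*B))^2 - 2*B*((C+1)/(2*B)) + C" by (rule h)
    with True False show ?thesis by (simp add: field_simps)
  qed (simp add: True)
next
  case False
  with A have Ap: "A > 0" by simp
  have "0 \<le> A*(B/A)^2 - 2*B*(B/A) + C" by (rule h)
  also have "A*(B/A)^2 - 2*B*(B/A) + C = (A*C - B^2)/A" using Ap by (simp add: field_simps power2_eq_square)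
  finally show ?thesis using Ap by (simp add: divide_nonneg_pos zero_le_divide_iff)
qed

lemma herm_entry: "hermitian \<rho> \<Longrightarrow> \<rho> $ j $ i = cnj (\<rho> $ i $ j)"
  unfolding hermitian_def by (metis cadj_def vec_lambda_beta)

lemma sd1: "(\<Sum>l\<in>UNIV. (f::'n::finite \<Rightarrow> complex) l * (if l = i then a else 0)) = f i * (a::complex)"
proof -
  have "(\<Sum>l\<in>UNIV. f l * (if l = i then a else 0)) = (\<Sum>l\<in>UNIV. if l = i then f i * a else 0)"
    by (rule sum.cong) auto
  then show ?thesis by simp
qed
lemma sd2: "(\<Sum>l\<in>UNIV. (if l = i then a else 0) * (f::'n::finite \<Rightarrow> complex) l) = a * (f i::complex)"
proof -
  have "(\<Sum>l\<in>UNIV. (if l = i then a else 0) * f l) = (\<Sum>l\<in>UNIV. if l = i then a * f i else 0)"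
    by (rule sum.cong) auto
  then show ?thesis by simp
qed

lemma diag_nonneg:
  assumes "density_op (\<rho>::complex^'n^'n)"
  shows "0 \<le> Re (\<rho> $ i $ i)"
proof -
  have ax: "axis i 1 $ k = (if k = i then 1 else (0::complex))" for k by (simp add: axis_def)
  have ax': "cnj (axis i 1 $ k) = (if k = i then 1 else (0::complex))" for k by (simp add: axis_def)
  have "qform \<rho> (axis i 1) = (\<Sum>k\<in>UNIV. (if k = i then 1 else 0) * (\<Sum>l\<in>UNIV. \<rho>$k$l * (if l = i then 1 else 0)))"
    unfolding qform_def ax by (simp add: sum_distrib_left mult.assoc if_distrib[of cnj] cong: if_cong)
  also have "\<dots> = \<rho> $ i $ i" by (simp only: sd1 sd2) simp
  finally show ?thesis using assms unfolding density_op_def by metis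
qed

definition xv :: "'n \<Rightarrow> 'n \<Rightarrow> complex \<Rightarrow> 'n \<Rightarrow> complex" where
  "xv i j s k = (if k = i then 1 else 0) + (if k = j then s else 0)"
lemma sum2: "(\<Sum>l\<in>UNIV. (f::'n::finite \<Rightarrow> complex) l * xv i j s l) = f i + f j * s"
  by (simp only: xv_def distrib_left sum.distrib sd1) simp
lemma sum2': "(\<Sum>l\<in>UNIV. cnj (xv i j s l) * (f::'n::finite \<Rightarrow> complex) l) = f i + cnj s * f j"
proof -
  have "cnj (xv i j s l) = (if l = i then 1 else 0) + (if l = j then cnj s else 0)" for l
    by (simp add: xv_def)
  then show ?thesis by (simp only: distrib_right sum.distrib sd2) simp
qed

lemma psd_minor:
  assumes d: "density_op (\<rho>::complex^'n^'n)" and ij: "i \<noteq> j"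
  shows "(cmod (\<rho>$i$j))^2 \<le> Re (\<rho>$i$i) * Re (\<rho>$j$j)"
proof -
  define c where "c = \<rho>$i$j"
  have herm: "hermitian \<rho>" using d by (simp add: density_op_def)
  have cji: "\<rho>$j$i = cnj c" unfolding c_def by (rule herm_entry[OF herm])
  have q: "0 \<le> (cmod c)^2 * Re (\<rho>$j$j) * t^2 - 2 * (cmod c)^2 * t + Re (\<rho>$i$i)" for t :: real
  proof -
    define s where "s = - (complex_of_real t) * cnj c"
    define x where "x = (\<chi> k. xv i j s k)"
    have "qform \<rho> x = (\<Sum>k\<in>UNIV. cnj (xv i j s k) * (\<Sum>l\<in>UNIV. \<rho>$k$l * xv i j s l))"
      by (simp add: qform_def x_def sum_distrib_left mult.assoc)
    also have "\<dots> = (\<rho>$i$i + \<rho>$i$j * s) + cnj s * (\<rho>$j$i + \<rho>$j$j * s)"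
      by (simp only: sum2 sum2')
    finally have qx: "qform \<rho> x = (\<rho>$i$i + c * s) + cnj s * (cnj c + \<rho>$j$j * s)"
      by (simp add: c_def cji)
    have "Re (qform \<rho> x) = ((Re c)^2 + (Im c)^2) * Re (\<rho>$j$j) * t^2 - 2 * ((Re c)^2 + (Im c)^2) * t + Re (\<rho>$i$i)"
      unfolding qx s_def
      by (simp add: algebra_simps power2_eq_square)
    then have "Re (qform \<rho> x) = (cmod c)^2 * Re (\<rho>$j$j) * t^2 - 2 * (cmod c)^2 * t + Re (\<rho>$i$i)"
      by (simp add: cmod_power2)
    moreover have "0 \<le> Re (qform \<rho> x)" using d unfolding density_op_def by blast
    ultimately show ?thesis by simp
  qed
  have A: "0 \<le> (cmod c)^2 * Re (\<rho>$j$j)" using diag_nonneg[OF d, of j] by simp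
  have "((cmod c)^2)^2 \<le> (cmod c)^2 * Re (\<rho>$j$j) * Re (\<rho>$i$i)"
    by (rule quad_disc[OF _ A]) (use q in simp)
  then show ?thesis
    unfolding c_def using diag_nonneg[OF d, of j] diag_nonneg[OF d, of i]
    by (cases "cmod (\<rho>$i$j) = 0") (auto simp: power2_eq_square mult.commute mult.left_commute)
qed


lemma p_le:
  assumes d: "density_op (\<rho>::complex^'n^'n)"
  shows "Re (trace (\<rho> ** \<rho>)) \<le> 1"
proof -
  have herm: "hermitian \<rho>" using d by (simp add: density_op_def)
  have tr1: "trace \<rho> = 1" using d by (simp add: density_op_def)
  have e: "Re (\<rho>$i$k * \<rho>$k$i) = (cmod (\<rho>$i$k))^2" for i k
    using herm_entry[OF herm, of k i] by (simp add: complex_mult_cnj cmod_power2)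
  have "Re (trace (\<rho> ** \<rho>)) = (\<Sum>i\<in>UNIV. \<Sum>k\<in>UNIV. Re (\<rho>$i$k * \<rho>$k$i))"
    by (simp add: trace_def matrix_matrix_mult_def)
  also have "\<dots> = (\<Sum>i\<in>UNIV. \<Sum>k\<in>UNIV. (cmod (\<rho>$i$k))^2)" by (simp only: e)
  also have "\<dots> \<le> (\<Sum>i\<in>UNIV. \<Sum>k\<in>UNIV. Re (\<rho>$i$i) * Re (\<rho>$k$k))"
  proof (intro sum_mono)
    fix i k
    show "(cmod (\<rho>$i$k))^2 \<le> Re (\<rho>$i$i) * Re (\<rho>$k$k)"
    proof (cases "i = k")
      case True
      have "\<rho>$i$i = cnj (\<rho>$i$i)" by (rule herm_entry[OF herm])
      then have "Im (\<rho>$i$i) = 0" by (metis complex_cnj_complex_of_real complex_cnj_zero_iff Reals_cnj_iff complex_is_Real_iff)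
      then have "(cmod (\<rho>$i$i))^2 = (Re (\<rho>$i$i))^2" by (simp add: cmod_power2)
      then show ?thesis using True by (simp add: power2_eq_square)
    next
      case False
      then show ?thesis by (rule psd_minor[OF d])
    qed
  qed
  also have "\<dots> = (\<Sum>i\<in>UNIV. Re (\<rho>$i$i)) * (\<Sum>k\<in>UNIV. Re (\<rho>$k$k))"
    by (simp add: sum_product)
  also have "\<dots> = 1" using tr1 by (simp add: trace_def flip: Re_sum)
  finally show ?thesis .
qed






lemma trace_minus: "trace (- (A::complex^'n^'n)) = - trace A"
  by (simp add: trace_def sum_negf)

lemma linear_retr: "linear (\<lambda>X. Re (trace ((C::complex^'n^'n) ** X)))"
  by (rule linearI) (simp_all add: matrix_add_ldistrib trace_add mm_scaleR_right trace_scaleR)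
lemma bl_retr: "bounded_linear (\<lambda>X. Re (trace ((C::complex^'n^'n) ** X)))"
  using linear_retr linear_conv_bounded_linear by blast

lemma real_of_cnj: "cnj z = z \<Longrightarrow> z = complex_of_real (Re z)"
  by (simp add: complex_eq_iff)

theorem proposition1:
  fixes \<rho> H :: "complex^'n^'n" and \<theta> :: real
    and \<rho>t :: "real \<Rightarrow> complex^'n^'n"
  assumes "density_op \<rho>" and "invertible \<rho>"
    and "hermitian H"
    and "\<And>t. \<rho>t t = mexp (csmat (- \<i> * complex_of_real t) H) ** \<rho> **
                       mexp (csmat (\<i> * complex_of_real t) H)"
  defines "\<Lambda> \<equiv> vector_derivative \<rho>t (at \<theta>) ** matrix_inv (\<rho>t \<theta>)"
  shows "((\<lambda>\<delta>. complex_of_real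
            (8 * (1 - sqrt (super_fidelity (\<rho>t \<theta>) (\<rho>t (\<theta> + \<delta>)))) / \<delta>\<^sup>2))
          \<longlongrightarrow> 2 * trace (cadj \<Lambda> ** \<Lambda> ** (\<rho>t \<theta> ** \<rho>t \<theta>))) (at 0)"
proof -
  note dens = assms(1)
  define K where "K = csmat (- \<i>) H"
  have cH: "cadj H = H" using assms(3) by (simp add: hermitian_def)
  have cK: "cadj K = - K"
  proof -
    have "cadj K = csmat \<i> H" unfolding K_def cadj_csmat cH by simp
    then show ?thesis by (simp add: K_def vec_eq_iff csmat_def)
  qed
  have scc: "t *\<^sub>R z = complex_of_real t * z" for t and z :: complex by (simp add: scaleR_conv_of_real)
  have sc1: "csmat (- \<i> * complex_of_real t) H = t *\<^sub>R K" for t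
    by (simp add: vec_eq_iff csmat_def K_def scc)
  have sc2: "csmat (\<i> * complex_of_real t) H = t *\<^sub>R (- K)" for t
    by (simp add: vec_eq_iff csmat_def K_def scc)
  define E where "E t = mexp (t *\<^sub>R K)" for t
  define F where "F t = mexp (t *\<^sub>R (- K))" for t
  have rt: "\<rho>t t = E t ** \<rho> ** F t" for t
    using assms(4)[of t] unfolding sc1 sc2 E_def F_def .
  have EF: "E t ** F t = mat 1" "F t ** E t = mat 1" for t
    unfolding E_def F_def by (rule mexp_inv)+
  have cE: "cadj (E t) = F t" for t
    by (simp add: E_def F_def cadj_mexp cadj_scaleR cK)
  have cF: "cadj (F t) = E t" for t
    by (simp add: E_def F_def cadj_mexp cadj_scaleR cadj_minus cK)
  have c\<rho>: "cadj \<rho> = \<rho>" using dens by (simp add: density_op_def hermitian_def)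
  define D where "D t = K ** \<rho>t t - \<rho>t t ** K" for t
  have dr: "(\<rho>t has_vector_derivative D t) (at t)" for t
  proof -
    have bl: "bounded_linear (\<lambda>X::complex^'n^'n. X ** \<rho>)"
      by (rule bounded_bilinear.bounded_linear_left[OF bb_mm])
    have d1: "((\<lambda>t. E t ** \<rho>) has_vector_derivative (K ** E t) ** \<rho>) (at t)"
      unfolding E_def by (rule bounded_linear.has_vector_derivative[OF bl mexp_deriv_left])
    have d2: "(F has_vector_derivative F t ** (- K)) (at t)"
      unfolding F_def by (rule mexp_deriv_right)
    have "((\<lambda>t. E t ** \<rho> ** F t) has_vector_derivative
        (E t ** \<rho>) ** (F t ** (- K)) + ((K ** E t) ** \<rho>) ** F t) (at t)"
      by (rule bounded_bilinear.has_vector_derivative[OF bb_mm d1 d2])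
    moreover have "(E t ** \<rho>) ** (F t ** (- K)) + ((K ** E t) ** \<rho>) ** F t = D t"
      by (simp add: D_def rt matrix_mul_assoc mm_minus_right)
    moreover have "(\<lambda>t. E t ** \<rho> ** F t) = \<rho>t" by (rule ext) (simp add: rt)
    ultimately show ?thesis by simp
  qed
  define \<sigma> where "\<sigma> = \<rho>t \<theta>"
  have vd: "vector_derivative \<rho>t (at \<theta>) = D \<theta>" by (rule vector_derivative_at[OF dr])
  have c\<sigma>: "cadj \<sigma> = \<sigma>"
    by (simp add: \<sigma>_def rt cadj_mult cE cF c\<rho> matrix_mul_assoc)
  obtain \<rho>i where \<rho>i: "\<rho> ** \<rho>i = mat 1" "\<rho>i ** \<rho> = mat 1"
    using assms(2) minv by blast
  have inv\<sigma>: "invertible \<sigma>"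
    unfolding invertible_def
  proof (intro exI conjI)
    have "\<sigma> ** (E \<theta> ** \<rho>i ** F \<theta>) = E \<theta> ** \<rho> ** (F \<theta> ** E \<theta>) ** \<rho>i ** F \<theta>"
      by (simp add: \<sigma>_def rt matrix_mul_assoc)
    also have "\<dots> = mat 1" by (simp add: EF \<rho>i flip: matrix_mul_assoc)
    finally show "\<sigma> ** (E \<theta> ** \<rho>i ** F \<theta>) = mat 1" .
    have "(E \<theta> ** \<rho>i ** F \<theta>) ** \<sigma> = E \<theta> ** \<rho>i ** (F \<theta> ** E \<theta>) ** \<rho> ** F \<theta>"
      by (simp add: \<sigma>_def rt matrix_mul_assoc)
    also have "\<dots> = mat 1" by (simp add: EF \<rho>i flip: matrix_mul_assoc)
    finally show "(E \<theta> ** \<rho>i ** F \<theta>) ** \<sigma> = mat 1" .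
  qed
  define S where "S = matrix_inv \<sigma>"
  have S: "\<sigma> ** S = mat 1" "S ** \<sigma> = mat 1" using minv[OF inv\<sigma>] by (simp_all add: S_def)
  have cS: "cadj S = S"
  proof -
    have l: "cadj S ** \<sigma> = mat 1" using arg_cong[OF S(1), of cadj] by (simp add: cadj_mult c\<sigma> cadj_mat1)
    have "cadj S = cadj S ** (\<sigma> ** S)" by (simp add: S(1))
    also have "\<dots> = (cadj S ** \<sigma>) ** S" by (rule matrix_mul_assoc)
    also have "\<dots> = S" by (simp add: l)
    finally show ?thesis .
  qed
  have trsq: "trace (\<rho>t t ** \<rho>t t) = trace (\<rho> ** \<rho>)" for t
  proof -
    have "\<rho>t t ** \<rho>t t = E t ** ((\<rho> ** (F t ** E t) ** \<rho>) ** F t)"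
      by (simp add: rt matrix_mul_assoc)
    also have "\<dots> = E t ** ((\<rho> ** \<rho>) ** F t)" by (simp add: EF)
    finally have "trace (\<rho>t t ** \<rho>t t) = trace (E t ** ((\<rho> ** \<rho>) ** F t))" by simp
    also have "\<dots> = trace (((\<rho> ** \<rho>) ** F t) ** E t)" by (rule trace_mul_sym)
    also have "\<dots> = trace (\<rho> ** \<rho>)" by (simp add: EF flip: matrix_mul_assoc)
    finally show ?thesis .
  qed
  define p where "p = Re (trace (\<rho> ** \<rho>))"
  have p1: "p \<le> 1" unfolding p_def by (rule p_le[OF dens])
  define f where "f \<delta> = Re (trace (\<sigma> ** \<rho>t (\<theta> + \<delta>)))" for \<delta>
  define C1 where "C1 = \<sigma> ** K - K ** \<sigma>"
  define f1 where "f1 \<delta> = Re (trace (C1 ** \<rho>t (\<theta> + \<delta>)))" for \<delta>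
  define f2 where "f2 = Re (trace (C1 ** D \<theta>))"
  have gd: "((\<lambda>t. Re (trace (C ** \<rho>t t))) has_real_derivative Re (trace (C ** D t))) (at t)" for C t
    unfolding has_real_derivative_iff_has_vector_derivative
    by (rule bounded_linear.has_vector_derivative[OF bl_retr dr])
  have sh: "((\<lambda>\<delta>. Re (trace (C ** \<rho>t (\<theta> + \<delta>)))) has_real_derivative Re (trace (C ** D (\<theta> + \<delta>)))) (at \<delta>)"
    for C \<delta>
    using gd[of C "\<delta> + \<theta>"] DERIV_shift[of "\<lambda>t. Re (trace (C ** \<rho>t t))" _ \<delta> \<theta>]
    by (simp add: add.commute)
  have fD: "Re (trace (\<sigma> ** D t)) = Re (trace (C1 ** \<rho>t t))" for t
  proof -
    have "trace (\<sigma> ** (\<rho>t t ** K)) = trace (K ** \<sigma> ** \<rho>t t)"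
      by (metis matrix_mul_assoc trace_mul_sym)
    then have "trace (\<sigma> ** D t) = trace (C1 ** \<rho>t t)"
      by (simp add: D_def C1_def mm_diff_right mm_diff_left trace_sub matrix_mul_assoc)
    then show ?thesis by simp
  qed
  have df: "(f has_real_derivative f1 \<delta>) (at \<delta>)" for \<delta>
    using sh[of \<sigma> \<delta>] unfolding f_def f1_def fD .
  have df1: "(f1 has_real_derivative Re (trace (C1 ** D (\<theta> + \<delta>)))) (at \<delta>)" for \<delta>
    using sh[of C1 \<delta>] unfolding f1_def .
  have f0: "f 0 = p" by (simp add: f_def p_def \<sigma>_def trsq)
  have f10: "f1 0 = 0"
  proof -
    have "trace (\<sigma> ** K ** \<sigma>) = trace (K ** \<sigma> ** \<sigma>)"
      by (metis matrix_mul_assoc trace_mul_sym)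
    then show ?thesis by (simp add: f1_def C1_def \<sigma>_def[symmetric] mm_diff_left trace_sub)
  qed
  have lim1: "((\<lambda>\<delta>. (f \<delta> - p) / \<delta>\<^sup>2) \<longlongrightarrow> f2 / 2) (at 0)"
  proof (rule lhopital[where f' = f1 and g' = "\<lambda>\<delta>. 2 * \<delta>"])
    have "isCont f 0" by (rule DERIV_isCont[OF df])
    then have "(f \<longlongrightarrow> p) (at 0)" using f0 by (simp add: isCont_def)
    then show "((\<lambda>\<delta>. f \<delta> - p) \<longlongrightarrow> 0) (at 0)" using tendsto_diff[of f p "at 0" "\<lambda>_. p" p] by simp
    show "((\<lambda>\<delta>::real. \<delta>\<^sup>2) \<longlongrightarrow> 0) (at 0)" by (auto intro!: tendsto_eq_intros)
    show "\<forall>\<^sub>F \<delta> in at (0::real). \<delta>\<^sup>2 \<noteq> 0" by (simp add: eventually_at_filter)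
    show "\<forall>\<^sub>F \<delta> in at (0::real). 2 * \<delta> \<noteq> 0" by (simp add: eventually_at_filter)
    show "\<forall>\<^sub>F \<delta> in at 0. ((\<lambda>\<delta>. f \<delta> - p) has_real_derivative f1 \<delta>) (at \<delta>)"
      by (intro always_eventually allI) (auto intro!: derivative_eq_intros df)
    show "\<forall>\<^sub>F \<delta> in at 0. ((\<lambda>\<delta>. \<delta>\<^sup>2) has_real_derivative 2 * \<delta>) (at \<delta>)"
      by (intro always_eventually allI) (auto intro!: derivative_eq_intros)
    have "((\<lambda>y. (f1 y - f1 0) / (y - 0)) \<longlongrightarrow> f2) (at 0)"
      using df1[of 0] unfolding has_field_derivative_iff by (simp add: f2_def)
    then have "((\<lambda>y. (f1 y / y) / 2) \<longlongrightarrow> f2 / 2) (at 0)"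
      by (intro tendsto_divide) (simp_all add: f10)
    then show "((\<lambda>\<delta>. f1 \<delta> / (2 * \<delta>)) \<longlongrightarrow> f2 / 2) (at 0)"
      by (simp add: field_simps)
  qed
  define G where "G \<delta> = super_fidelity \<sigma> (\<rho>t (\<theta> + \<delta>))" for \<delta>
  have G: "G \<delta> = 1 + (f \<delta> - p)" for \<delta>
  proof -
    have "sqrt ((1 - Re (trace (\<sigma> ** \<sigma>))) * (1 - Re (trace (\<rho>t (\<theta> + \<delta>) ** \<rho>t (\<theta> + \<delta>))))) = 1 - p"
      using p1 by (simp add: \<sigma>_def trsq p_def[symmetric])
    then show ?thesis by (simp add: G_def super_fidelity_def f_def)
  qed
  have Glim: "(G \<longlongrightarrow> 1) (at 0)"
  proof -
    have "((\<lambda>\<delta>. (f \<delta> - p) / \<delta>\<^sup>2 * \<delta>\<^sup>2) \<longlongrightarrow> f2 / 2 * 0\<^sup>2) (at 0)"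
      by (intro tendsto_intros lim1)
    moreover have "\<forall>\<^sub>F \<delta> in at (0::real). (f \<delta> - p) / \<delta>\<^sup>2 * \<delta>\<^sup>2 = f \<delta> - p"
      by (simp add: eventually_at_filter)
    ultimately have "((\<lambda>\<delta>. f \<delta> - p) \<longlongrightarrow> 0) (at 0)"
      by (simp add: tendsto_cong)
    then have "((\<lambda>\<delta>. 1 + (f \<delta> - p)) \<longlongrightarrow> 1 + 0) (at 0)" by (intro tendsto_intros)
    moreover have "G = (\<lambda>\<delta>. 1 + (f \<delta> - p))" by (rule ext) (rule G)
    ultimately show ?thesis by simp
  qed
  have evG: "\<forall>\<^sub>F \<delta> in at 0. 0 < G \<delta>"
    using order_tendstoD(1)[OF Glim, of 0] by simp
  have lim2: "((\<lambda>\<delta>. 8 * (1 - sqrt (G \<delta>)) / \<delta>\<^sup>2) \<longlongrightarrow> - 2 * f2) (at 0)"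
  proof -
    have "((\<lambda>\<delta>. - 8 * ((f \<delta> - p) / \<delta>\<^sup>2) / (1 + sqrt (G \<delta>))) \<longlongrightarrow> - 8 * (f2 / 2) / (1 + sqrt 1)) (at 0)"
      by (intro tendsto_intros lim1 Glim) simp
    moreover have "\<forall>\<^sub>F \<delta> in at 0. - 8 * ((f \<delta> - p) / \<delta>\<^sup>2) / (1 + sqrt (G \<delta>)) = 8 * (1 - sqrt (G \<delta>)) / \<delta>\<^sup>2"
      using evG
    proof eventually_elim
      case (elim \<delta>)
      have s: "sqrt (G \<delta>) * sqrt (G \<delta>) = G \<delta>" using elim by simp
      have pos: "1 + sqrt (G \<delta>) \<noteq> 0" using elim by (smt (verit) real_sqrt_ge_zero)
      have "(1 - sqrt (G \<delta>)) * (1 + sqrt (G \<delta>)) = - (f \<delta> - p)"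
        using s G[of \<delta>] by (simp add: algebra_simps)
      then have h: "1 - sqrt (G \<delta>) = - (f \<delta> - p) / (1 + sqrt (G \<delta>))"
        using pos by (simp add: field_simps)
      show ?case unfolding h
        by ((simp; fail) | (simp add: divide_simps; fail) | (simp add: field_simps; fail) | (simp add: algebra_simps; fail))
    qed
    ultimately show ?thesis by (simp add: tendsto_cong)
  qed
  have DD: "cadj (D \<theta>) = D \<theta>"
    by (simp add: D_def \<sigma>_def[symmetric] cadj_diff cadj_mult c\<sigma> cK mm_minus_left mm_minus_right)
  have C1D: "C1 = - D \<theta>" by (simp add: C1_def D_def \<sigma>_def)
  have trreal: "trace (D \<theta> ** D \<theta>) = complex_of_real (Re (trace (D \<theta> ** D \<theta>)))"
    by (rule real_of_cnj) (simp add: trace_cadj[symmetric] cadj_mult DD)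
  have rhs: "trace (cadj \<Lambda> ** \<Lambda> ** (\<rho>t \<theta> ** \<rho>t \<theta>)) = trace (D \<theta> ** D \<theta>)"
  proof -
    have "cadj \<Lambda> ** \<Lambda> ** (\<sigma> ** \<sigma>) = S ** (D \<theta> ** (D \<theta> ** ((S ** \<sigma>) ** \<sigma>)))"
      by (simp add: \<Lambda>_def vd \<sigma>_def[symmetric] S_def[symmetric] cadj_mult cS DD matrix_mul_assoc)
    also have "\<dots> = S ** (D \<theta> ** D \<theta> ** \<sigma>)" by (simp add: S matrix_mul_assoc)
    finally have "trace (cadj \<Lambda> ** \<Lambda> ** (\<sigma> ** \<sigma>)) = trace (S ** (D \<theta> ** D \<theta> ** \<sigma>))" by simp
    also have "\<dots> = trace ((D \<theta> ** D \<theta> ** \<sigma>) ** S)" by (rule trace_mul_sym)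
    also have "\<dots> = trace (D \<theta> ** D \<theta>)" by (simp add: S flip: matrix_mul_assoc)
    finally show ?thesis by (simp add: \<sigma>_def)
  qed
  have fin: "complex_of_real (- 2 * f2) = 2 * trace (cadj \<Lambda> ** \<Lambda> ** (\<rho>t \<theta> ** \<rho>t \<theta>))"
  proof -
    have "f2 = - Re (trace (D \<theta> ** D \<theta>))" by (simp add: f2_def C1D mm_minus_left trace_minus)
    then show ?thesis using trreal by (simp add: rhs)
  qed
  have "((\<lambda>\<delta>. complex_of_real (8 * (1 - sqrt (G \<delta>)) / \<delta>\<^sup>2)) \<longlongrightarrow> complex_of_real (- 2 * f2)) (at 0)"
    by (rule tendsto_of_real[OF lim2])
  then show ?thesis unfolding fin G_def \<sigma>_def .
qed

end
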